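(* For every $n\ge 2$ there exist nonnegative numbers $\gamma_{n,i}$ such that $$\mathcal{A}_n^{(2)}(t):=\sum_{k=0}^{n-1}\mathcal{A}^{(2)}(n,k)\,t^k=\sum_{i=0}^{\lfloor (n-1)/2\rfloor}\gamma_{n,i}\,t^i(1+t)^{n-1-2i}.$$
   Context: A subexceedant function on $[n]$ is a map $f:[n]\to[n]$ with $1\le f(i)\le i$; its block leader set is $\mathrm{bl}(f)=\{i\in[n]: f(i)\notin f(\{1,\dots,i-1\})\}$. $\mathcal{A}^{(2)}(n,k)$ is the number of pairs $(f_1,f_2)$ of subexceedant functions on $[n]$ with $|\mathrm{bl}(f_1)|=k+1$ and $\mathrm{bl}(f_1)=\mathrm{bl}(f_2)$. *)

theory Defs
  imports Complex_Main
begin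

text \<open>Subexceedant functions on [n] = {1..n}, represented as functions nat => nat
  that vanish outside {1..n} (so that the set of them is finite).\<close>
definition subexc :: "nat \<Rightarrow> (nat \<Rightarrow> nat) set" where
  "subexc n = {f. (\<forall>i\<in>{1..n}. 1 \<le> f i \<and> f i \<le> i) \<and> (\<forall>i. i \<notin> {1..n} \<longrightarrow> f i = 0)}"

definition bl :: "nat \<Rightarrow> (nat \<Rightarrow> nat) \<Rightarrow> nat set" where
  "bl n f = {i \<in> {1..n}. f i \<notin> f ` {1..<i}}"

definition A2 :: "nat \<Rightarrow> nat \<Rightarrow> nat" where
  "A2 n k = card {(f1, f2). f1 \<in> subexc n \<and> f2 \<in> subexc n \<and>
                            card (bl n f1) = k + 1 \<and> bl n f1 = bl n f2}"

end

theory Submission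
  imports Defs "HOL-Computational_Algebra.Polynomial"
begin

definition W :: "nat \<Rightarrow> nat \<Rightarrow> ((nat \<Rightarrow> nat) \<times> (nat \<Rightarrow> nat)) set" where
  "W n k = {(f1, f2). f1 \<in> subexc n \<and> f2 \<in> subexc n \<and> card (bl n f1) = k \<and> bl n f1 = bl n f2}"

lemma A2_W: "A2 n k = card (W n (Suc k))"
  by (simp add: A2_def W_def)

lemma subexc_finite: "finite (subexc n)"
proof -
  have "subexc n \<subseteq> {f. \<forall>x. (x \<in> {1..n} \<longrightarrow> f x \<in> {0..n}) \<and> (x \<notin> {1..n} \<longrightarrow> f x = 0)}"
    unfolding subexc_def by clarsimp (metis atLeastAtMost_iff order_trans)
  moreover have "finite {f. \<forall>x. (x \<in> {1..n} \<longrightarrow> f x \<in> {0..n}) \<and> (x \<notin> {1..n} \<longrightarrow> (f::nat\<Rightarrow>nat) x = 0)}"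
    by (rule finite_set_of_finite_funs) auto
  ultimately show ?thesis by (rule finite_subset)
qed

lemma W_finite: "finite (W n k)"
proof -
  have "W n k \<subseteq> subexc n \<times> subexc n" unfolding W_def by auto
  then show ?thesis using subexc_finite finite_subset by blast
qed

lemma bl_sub: "bl n f \<subseteq> {1..n}" unfolding bl_def by auto

lemma img_bl:
  shows "f ` {1..n} = f ` bl n f"
proof
  show "f ` bl n f \<subseteq> f ` {1..n}" using bl_sub by auto
next
  show "f ` {1..n} \<subseteq> f ` bl n f"
  proof
    fix y assume "y \<in> f ` {1..n}"
    then obtain i where i: "i \<in> {1..n}" "f i = y" by auto
    define i0 where "i0 = (LEAST j. j \<in> {1..n} \<and> f j = y)"
    have i0: "i0 \<in> {1..n} \<and> f i0 = y" unfolding i0_def by (rule LeastI[of _ i]) (use i in auto)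
    have "\<And>j. j \<in> {1..n} \<and> f j = y \<Longrightarrow> i0 \<le> j" unfolding i0_def by (rule Least_le)
    then have "f i0 \<notin> f ` {1..<i0}" using i0 by fastforce
    then have "i0 \<in> bl n f" unfolding bl_def using i0 by auto
    then show "y \<in> f ` bl n f" using i0 by auto
  qed
qed

lemma inj_bl: "inj_on f (bl n f)"
proof (rule inj_onI)
  fix i j assume ij: "i \<in> bl n f" "j \<in> bl n f" "f i = f j"
  show "i = j"
  proof (rule ccontr)
    assume "i \<noteq> j"
    then consider "i < j" | "j < i" by linarith
    then show False
    proof cases
      case 1
      then have "f j \<in> f ` {1..<j}" using ij bl_sub by (metis atLeastAtMost_iff atLeastLessThan_iff image_eqI subsetD)
      then show False using ij(2) unfolding bl_def by auto
    next
      case 2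
      then have "f i \<in> f ` {1..<i}" using ij bl_sub by (metis atLeastAtMost_iff atLeastLessThan_iff image_eqI subsetD)
      then show False using ij(1) unfolding bl_def by auto
    qed
  qed
qed

lemma card_img: "card (f ` {1..n}) = card (bl n f)"
  by (metis img_bl card_image inj_bl)

lemma img_sub: "f \<in> subexc n \<Longrightarrow> f ` {1..n} \<subseteq> {1..n}"
  unfolding subexc_def by clarsimp (metis atLeastAtMost_iff order_trans)

lemma subexc_out: "f \<in> subexc n \<Longrightarrow> f (Suc n) = 0"
  unfolding subexc_def by auto

lemma ext_subexc: "g \<in> subexc n \<Longrightarrow> v \<in> {1..Suc n} \<Longrightarrow> g(Suc n := v) \<in> subexc (Suc n)"
  unfolding subexc_def by auto

lemma restr_subexc: "f \<in> subexc (Suc n) \<Longrightarrow> f(Suc n := 0) \<in> subexc n"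
  unfolding subexc_def by auto

lemma restr_val: "f \<in> subexc (Suc n) \<Longrightarrow> f (Suc n) \<in> {1..Suc n}"
  unfolding subexc_def by auto

lemma bl_ext:
  assumes "g \<in> subexc n"
  shows "bl (Suc n) (g(Suc n := v)) = bl n g \<union> (if v \<in> g ` {1..n} then {} else {Suc n})"
proof -
  have a: "(g(Suc n := v)) ` {1..<i} = g ` {1..<i}" if "i \<le> Suc n" for i
    using that by (intro image_cong) auto
  have b: "{1..<Suc n} = {1..n}" by auto
  show ?thesis
  proof (rule set_eqI)
    fix i
    show "i \<in> bl (Suc n) (g(Suc n := v)) \<longleftrightarrow> i \<in> bl n g \<union> (if v \<in> g ` {1..n} then {} else {Suc n})"
    proof (cases "i = Suc n")
      case True
      then show ?thesis using a[of i] b unfolding bl_def by auto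
    next
      case False
      then show ?thesis using a[of i] unfolding bl_def by auto
    qed
  qed
qed

lemma W_rec:
  "card (W (Suc n) (Suc k)) = (Suc k)^2 * card (W n (Suc k)) + (Suc n - k)^2 * card (W n k)"
proof -
  define h where "h = (\<lambda>((g1::nat\<Rightarrow>nat, g2::nat\<Rightarrow>nat), (v1::nat, v2::nat)). (g1(Suc n := v1), g2(Suc n := v2)))"
  define S1 where "S1 = Sigma (W n (Suc k)) (\<lambda>(g1,g2). g1 ` {1..n} \<times> g2 ` {1..n})"
  define S2 where "S2 = Sigma (W n k) (\<lambda>(g1,g2). ({1..Suc n} - g1 ` {1..n}) \<times> ({1..Suc n} - g2 ` {1..n}))"
  have fin1: "finite S1" unfolding S1_def using W_finite by (auto intro!: finite_SigmaI)
  have fin2: "finite S2" unfolding S2_def using W_finite by (auto intro!: finite_SigmaI)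
  have c1: "card S1 = card (W n (Suc k)) * (Suc k)^2"
  proof -
    have "card S1 = (\<Sum>p\<in>W n (Suc k). card ((\<lambda>(g1,g2). g1 ` {1..n} \<times> g2 ` {1..n}) p))"
      unfolding S1_def using W_finite by (intro card_SigmaI) auto
    also have "\<dots> = (\<Sum>p\<in>W n (Suc k). (Suc k)^2)"
    proof (rule sum.cong)
      fix p assume "p \<in> W n (Suc k)"
      then obtain g1 g2 where p: "p = (g1,g2)" "card (bl n g1) = Suc k" "bl n g1 = bl n g2"
        unfolding W_def by auto
      have "card (g1 ` {1..n}) = Suc k" "card (g2 ` {1..n}) = Suc k" using card_img[of g1 n] card_img[of g2 n] p by auto
      then show "card ((\<lambda>(g1,g2). g1 ` {1..n} \<times> g2 ` {1..n}) p) = (Suc k)^2"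
        unfolding p by (simp add: card_cartesian_product power2_eq_square)
    qed simp
    finally show ?thesis by simp
  qed
  have c2: "card S2 = card (W n k) * (Suc n - k)^2"
  proof -
    have cd: "card ({1..Suc n} - g ` {1..n}) = Suc n - card (bl n g)" if "g \<in> subexc n" for g
    proof -
      have "g ` {1..n} \<subseteq> {1..Suc n}" using img_sub[OF that] by auto
      then have "card ({1..Suc n} - g ` {1..n}) = card {1..Suc n} - card (g ` {1..n})"
        by (intro card_Diff_subset) auto
      then show ?thesis using card_img[of g n] by simp
    qed
    have "card S2 = (\<Sum>p\<in>W n k. card ((\<lambda>(g1,g2). ({1..Suc n} - g1 ` {1..n}) \<times> ({1..Suc n} - g2 ` {1..n})) p))"
      unfolding S2_def using W_finite by (intro card_SigmaI) auto
    also have "\<dots> = (\<Sum>p\<in>W n k. (Suc n - k)^2)"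
    proof (rule sum.cong)
      fix p assume "p \<in> W n k"
      then obtain g1 g2 where p: "p = (g1,g2)" "card (bl n g1) = k" "bl n g1 = bl n g2" "g1 \<in> subexc n" "g2 \<in> subexc n"
        unfolding W_def by auto
      have "card ({1..Suc n} - g1 ` {1..n}) = Suc n - k" "card ({1..Suc n} - g2 ` {1..n}) = Suc n - k"
        using cd[of g1] cd[of g2] p by auto
      then show "card ((\<lambda>(g1,g2). ({1..Suc n} - g1 ` {1..n}) \<times> ({1..Suc n} - g2 ` {1..n})) p) = (Suc n - k)^2"
        unfolding p by (simp add: card_cartesian_product power2_eq_square)
    qed simp
    finally show ?thesis by simp
  qed
  have disj: "S1 \<inter> S2 = {}" unfolding S1_def S2_def by auto
  have inj: "inj_on h (S1 \<union> S2)"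
  proof (rule inj_onI)
    fix x y assume x: "x \<in> S1 \<union> S2" and y: "y \<in> S1 \<union> S2" and hxy: "h x = h y"
    obtain g1 g2 v1 v2 where xe: "x = ((g1,g2),(v1,v2))" by (metis prod.collapse)
    obtain g1' g2' v1' v2' where ye: "y = ((g1',g2'),(v1',v2'))" by (metis prod.collapse)
    have gs: "g1 \<in> subexc n" "g2 \<in> subexc n" "g1' \<in> subexc n" "g2' \<in> subexc n"
      using x y unfolding xe ye S1_def S2_def W_def by auto
    have e1: "g1(Suc n := v1) = g1'(Suc n := v1')" "g2(Suc n := v2) = g2'(Suc n := v2')"
      using hxy unfolding xe ye h_def by auto
    have "v1 = v1'" "v2 = v2'" using fun_cong[OF e1(1), of "Suc n"] fun_cong[OF e1(2), of "Suc n"] by auto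
    moreover have "g1 = g1'"
    proof
      fix i show "g1 i = g1' i"
        using fun_cong[OF e1(1), of i] subexc_out[OF gs(1)] subexc_out[OF gs(3)] by (cases "i = Suc n") auto
    qed
    moreover have "g2 = g2'"
    proof
      fix i show "g2 i = g2' i"
        using fun_cong[OF e1(2), of i] subexc_out[OF gs(2)] subexc_out[OF gs(4)] by (cases "i = Suc n") auto
    qed
    ultimately show "x = y" unfolding xe ye by simp
  qed
  have img: "W (Suc n) (Suc k) = h ` (S1 \<union> S2)"
  proof
    show "h ` (S1 \<union> S2) \<subseteq> W (Suc n) (Suc k)"
    proof
      fix z assume "z \<in> h ` (S1 \<union> S2)"
      then obtain g1 g2 v1 v2 where x: "((g1,g2),(v1,v2)) \<in> S1 \<union> S2" and z: "z = (g1(Suc n := v1), g2(Suc n := v2))"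
        unfolding h_def by auto
      show "z \<in> W (Suc n) (Suc k)"
      proof (cases "((g1,g2),(v1,v2)) \<in> S1")
        case True
        then have w: "g1 \<in> subexc n" "g2 \<in> subexc n" "card (bl n g1) = Suc k" "bl n g1 = bl n g2"
          "v1 \<in> g1 ` {1..n}" "v2 \<in> g2 ` {1..n}"
          unfolding S1_def W_def by auto
        have "v1 \<in> {1..Suc n}" "v2 \<in> {1..Suc n}" using w img_sub by fastforce+
        then show ?thesis unfolding z W_def using w by (auto simp: bl_ext ext_subexc)
      next
        case False
        then have "((g1,g2),(v1,v2)) \<in> S2" using x by auto
        then have w: "g1 \<in> subexc n" "g2 \<in> subexc n" "card (bl n g1) = k" "bl n g1 = bl n g2"
          "v1 \<in> {1..Suc n} - g1 ` {1..n}" "v2 \<in> {1..Suc n} - g2 ` {1..n}"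
          unfolding S2_def W_def by auto
        have "Suc n \<notin> bl n g1" using bl_sub by fastforce
        moreover have "finite (bl n g1)" using bl_sub finite_subset by blast
        ultimately have "card (bl n g1 \<union> {Suc n}) = Suc k" using w(3) by simp
        then show ?thesis unfolding z W_def using w by (auto simp: bl_ext ext_subexc)
      qed
    qed
  next
    show "W (Suc n) (Suc k) \<subseteq> h ` (S1 \<union> S2)"
    proof
      fix z assume zW: "z \<in> W (Suc n) (Suc k)"
      obtain f1 f2 where z: "z = (f1, f2)" by (metis prod.collapse)
      have f: "f1 \<in> subexc (Suc n)" "f2 \<in> subexc (Suc n)" "card (bl (Suc n) f1) = Suc k"
        "bl (Suc n) f1 = bl (Suc n) f2" using zW unfolding z W_def by auto
      define g1 where "g1 = f1(Suc n := 0)"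
      define g2 where "g2 = f2(Suc n := 0)"
      have g: "g1 \<in> subexc n" "g2 \<in> subexc n" unfolding g1_def g2_def using f restr_subexc by auto
      have fe: "f1 = g1(Suc n := f1 (Suc n))" "f2 = g2(Suc n := f2 (Suc n))" unfolding g1_def g2_def by auto
      have v: "f1 (Suc n) \<in> {1..Suc n}" "f2 (Suc n) \<in> {1..Suc n}" using f restr_val by auto
      have bl1: "bl (Suc n) f1 = bl n g1 \<union> (if f1 (Suc n) \<in> g1 ` {1..n} then {} else {Suc n})"
        by (subst fe(1)) (rule bl_ext[OF g(1)])
      have bl2: "bl (Suc n) f2 = bl n g2 \<union> (if f2 (Suc n) \<in> g2 ` {1..n} then {} else {Suc n})"
        by (subst fe(2)) (rule bl_ext[OF g(2)])
      have nn1: "Suc n \<notin> bl n g1" "Suc n \<notin> bl n g2" using bl_sub by fastforce+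
      have hz: "z = h ((g1,g2),(f1 (Suc n), f2 (Suc n)))" unfolding h_def z using fe by simp
      show "z \<in> h ` (S1 \<union> S2)"
      proof (cases "f1 (Suc n) \<in> g1 ` {1..n}")
        case True
        then have "Suc n \<notin> bl (Suc n) f1" using bl1 nn1 by auto
        then have "f2 (Suc n) \<in> g2 ` {1..n}" using f(4) bl2 by (auto split: if_splits)
        then have "bl n g1 = bl n g2" "card (bl n g1) = Suc k" using True bl1 bl2 f by auto
        then have "((g1,g2),(f1 (Suc n), f2 (Suc n))) \<in> S1"
          unfolding S1_def W_def using g True \<open>f2 (Suc n) \<in> g2 ` {1..n}\<close> by auto
        then show ?thesis using hz by blast
      next
        case False
        then have "Suc n \<in> bl (Suc n) f1" using bl1 by auto
        then have F2: "f2 (Suc n) \<notin> g2 ` {1..n}" using f(4) bl2 nn1 by (auto split: if_splits)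
        have "bl n g1 = bl (Suc n) f1 - {Suc n}" using bl1 False nn1 by auto
        moreover have "bl n g2 = bl (Suc n) f2 - {Suc n}" using bl2 F2 nn1 by auto
        ultimately have eq: "bl n g1 = bl n g2" using f(4) by simp
        have "finite (bl (Suc n) f1)" using bl_sub finite_subset by blast
        then have "card (bl n g1) = k" using \<open>bl n g1 = bl (Suc n) f1 - {Suc n}\<close> \<open>Suc n \<in> bl (Suc n) f1\<close> f(3)
          by simp
        then have "((g1,g2),(f1 (Suc n), f2 (Suc n))) \<in> S2"
          unfolding S2_def W_def using g False F2 v eq by auto
        then show ?thesis using hz by blast
      qed
    qed
  qed
  have "card (W (Suc n) (Suc k)) = card (S1 \<union> S2)" unfolding img using inj by (rule card_image)
  also have "\<dots> = card S1 + card S2" using fin1 fin2 disj by (rule card_Un_disjoint)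
  finally show ?thesis using c1 c2 by simp
qed

lemma W_zero: "n \<ge> 1 \<Longrightarrow> W n 0 = {}"
proof -
  assume n: "n \<ge> 1"
  have "1 \<in> bl n f" for f unfolding bl_def using n by auto
  moreover have "finite (bl n f)" for f using bl_sub finite_subset by blast
  ultimately have "card (bl n f) \<noteq> 0" for f by auto
  then show ?thesis unfolding W_def by auto
qed

lemma W_big: "n < k \<Longrightarrow> W n k = {}"
proof -
  assume "n < k"
  have "card (bl n f) \<le> n" for f using card_mono[OF _ bl_sub[of n f]] by simp
  then have "card (bl n f) \<noteq> k" for f using \<open>n < k\<close> by (metis not_le)
  then show ?thesis unfolding W_def by auto
qed

lemma W0: "card (W 0 k) = (if k = 0 then 1 else 0)"
proof -
  have s: "subexc 0 = {\<lambda>_. 0}" unfolding subexc_def by auto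
  have b: "bl 0 f = {}" for f unfolding bl_def by auto
  show ?thesis unfolding W_def s b by auto
qed

lemma A2_big: "n \<le> k \<Longrightarrow> A2 n k = 0"
  by (simp add: A2_W W_big)

lemma A2_rec:
  assumes "n \<ge> 1"
  shows "A2 (Suc n) k = (Suc k)^2 * A2 n k + (if k = 0 then 0 else (Suc n - k)^2 * A2 n (k - 1))"
  using W_rec[of n k] assms by (cases k) (auto simp: A2_W W_zero)

lemma A2_one: "A2 1 k = (if k = 0 then 1 else 0)"
  using W_rec[of 0 k] by (simp add: A2_W W0)

definition Xp :: "real poly" where "Xp = [:0,1:]"
definition Yp :: "real poly" where "Yp = [:1,1:]"
definition Eop :: "real poly \<Rightarrow> real poly" where "Eop p = Xp * pderiv p"

lemma Y_eq: "Yp = 1 + Xp" by (simp add: Xp_def Yp_def one_pCons)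
lemma E_add: "Eop (p + q) = Eop p + Eop q" by (simp add: Eop_def pderiv_add algebra_simps)
lemma E_diff: "Eop (p - q) = Eop p - Eop q" by (simp add: Eop_def pderiv_diff algebra_simps)
lemma E_mult: "Eop (p * q) = Eop p * q + p * Eop q" by (simp add: Eop_def pderiv_mult algebra_simps)
lemma E_const: "Eop (of_nat c) = 0" by (simp add: Eop_def)
lemma E_of_nat: "Eop (of_nat c * p) = of_nat c * Eop p" by (simp add: E_mult E_const)
lemma E_numeral: "Eop (numeral c * p) = numeral c * Eop p"
  using E_of_nat[of "numeral c" p] by simp
lemma E_X: "Eop Xp = Xp" by (simp add: Eop_def Xp_def pderiv_pCons)
lemma E_Y: "Eop Yp = Xp" by (simp add: Eop_def Xp_def Yp_def pderiv_pCons)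
lemma E_Xpow: "Eop (Xp ^ a) = of_nat a * Xp ^ a"
proof (induction a)
  case 0 then show ?case by (simp add: Eop_def)
next
  case (Suc a) then show ?case by (simp add: E_mult E_X algebra_simps)
qed
lemma E_Ypow: "Eop (Yp ^ Suc c) = of_nat (Suc c) * (Xp * Yp ^ c)"
proof (induction c)
  case 0 then show ?case by (simp add: E_Y)
next
  case (Suc c) then show ?case by (simp add: E_mult E_Y algebra_simps)
qed
lemma E_b: "Eop (Xp ^ a * Yp ^ Suc c) = of_nat a * (Xp ^ a * Yp ^ Suc c) + of_nat (Suc c) * (Xp ^ Suc a * Yp ^ c)"
  by (simp only: E_mult E_Xpow E_Ypow) (simp add: algebra_simps)
lemma E_b0: "Eop (Xp ^ a) = of_nat a * Xp ^ a"
  by (simp add: E_Xpow)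

definition Lop :: "nat \<Rightarrow> real poly \<Rightarrow> real poly" where
  "Lop n p = p + 2 * Eop p + Eop (Eop p) + Xp * (of_nat n ^ 2 * p - 2 * of_nat n * Eop p + Eop (Eop p))"

lemma L_b0:
  "Lop (Suc (2*i)) (Xp ^ i) = of_nat ((i+1)^2) * (Xp ^ i * Yp)"
proof -
  have "Lop (Suc (2*i)) (Xp ^ i) = Xp^i + 2 * (of_nat i * Xp^i) + of_nat i * (of_nat i * Xp^i) + Xp * (of_nat (Suc (2*i)) ^ 2 * Xp^i - 2 * of_nat (Suc (2*i)) * (of_nat i * Xp^i) + of_nat i * (of_nat i * Xp^i))"
    unfolding Lop_def by (simp only: E_Xpow E_of_nat)
  also have "... = of_nat ((i+1)^2) * (Xp ^ i * Yp)"
    unfolding Y_eq by (simp add: algebra_simps power2_eq_square)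
  finally show ?thesis .
qed

lemma L_b2:
  "Lop (Suc (2*i + Suc (Suc c))) (Xp ^ i * Yp ^ Suc (Suc c)) =
     of_nat ((i+1)^2) * (Xp ^ i * Yp ^ Suc (Suc (Suc c)))
      + of_nat (Suc (Suc c) * (Suc (Suc c) + 4 * i + 5)) * (Xp ^ Suc i * Yp ^ Suc c)"
proof -
  define b where "b = Xp ^ i * Yp ^ Suc (Suc c)"
  define b1 where "b1 = Xp ^ Suc i * Yp ^ Suc c"
  define b2 where "b2 = Xp ^ Suc (Suc i) * Yp ^ c"
  have e1: "Eop b = of_nat i * b + of_nat (Suc (Suc c)) * b1"
    unfolding b_def b1_def by (rule E_b)
  have e2: "Eop b1 = of_nat (Suc i) * b1 + of_nat (Suc c) * b2"
    unfolding b2_def b1_def by (rule E_b)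
  have ee: "Eop (Eop b) = of_nat i * (of_nat i * b + of_nat (Suc (Suc c)) * b1) + of_nat (Suc (Suc c)) * (of_nat (Suc i) * b1 + of_nat (Suc c) * b2)"
    by (simp only: e1 e2 E_add E_of_nat)
  have "Lop (Suc (2*i + Suc (Suc c))) b = b + 2 * (of_nat i * b + of_nat (Suc (Suc c)) * b1) + (of_nat i * (of_nat i * b + of_nat (Suc (Suc c)) * b1) + of_nat (Suc (Suc c)) * (of_nat (Suc i) * b1 + of_nat (Suc c) * b2))
     + Xp * (of_nat (Suc (2*i + Suc (Suc c))) ^ 2 * b - 2 * of_nat (Suc (2*i + Suc (Suc c))) * (of_nat i * b + of_nat (Suc (Suc c)) * b1) + (of_nat i * (of_nat i * b + of_nat (Suc (Suc c)) * b1) + of_nat (Suc (Suc c)) * (of_nat (Suc i) * b1 + of_nat (Suc c) * b2)))"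
    unfolding Lop_def by (simp only: ee, simp only: e1)
  also have "... = of_nat ((i+1)^2) * (Xp ^ i * Yp ^ Suc (Suc (Suc c)))
      + of_nat (Suc (Suc c) * (Suc (Suc c) + 4 * i + 5)) * (Xp ^ Suc i * Yp ^ Suc c)"
    unfolding b_def b1_def b2_def power_Suc Y_eq by (simp add: algebra_simps power2_eq_square)
  finally show ?thesis unfolding b_def .
qed

lemma L_b1:
  "Lop (Suc (2*i + Suc 0)) (Xp ^ i * Yp) =
     of_nat ((i+1)^2) * (Xp ^ i * Yp ^ Suc (Suc 0))
      + of_nat (Suc 0 * (Suc 0 + 4 * i + 5)) * (Xp ^ Suc i)"
proof -
  define b where "b = Xp ^ i * Yp"
  define b1 where "b1 = Xp ^ Suc i"
  have e1: "Eop b = of_nat i * b + b1"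
    unfolding b_def b1_def using E_b[of i 0] by simp
  have e2: "Eop b1 = of_nat (Suc i) * b1"
    unfolding b1_def by (rule E_Xpow)
  have ee: "Eop (Eop b) = of_nat i * (of_nat i * b + b1) + of_nat (Suc i) * b1"
    by (simp only: e1 e2 E_add E_of_nat)
  have "Lop (Suc (2*i + Suc 0)) b = b + 2 * (of_nat i * b + b1) + (of_nat i * (of_nat i * b + b1) + of_nat (Suc i) * b1)
     + Xp * (of_nat (Suc (2*i + Suc 0)) ^ 2 * b - 2 * of_nat (Suc (2*i + Suc 0)) * (of_nat i * b + b1) + (of_nat i * (of_nat i * b + b1) + of_nat (Suc i) * b1))"
    unfolding Lop_def by (simp only: ee, simp only: e1)
  also have "... = of_nat ((i+1)^2) * (Xp ^ i * Yp ^ Suc (Suc 0))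
      + of_nat (Suc 0 * (Suc 0 + 4 * i + 5)) * (Xp ^ Suc i)"
    unfolding b_def b1_def power_Suc Y_eq by (simp add: algebra_simps power2_eq_square)
  finally show ?thesis unfolding b_def .
qed

lemma L_b:
  assumes "m = 2 * i + r"
  shows "Lop (Suc m) (Xp ^ i * Yp ^ r) = of_nat ((i+1)^2) * (Xp ^ i * Yp ^ Suc r)
      + of_nat (r * (r + 4 * i + 5)) * (Xp ^ Suc i * Yp ^ (r - 1))"
proof -
  consider "r = 0" | "r = 1" | c where "r = Suc (Suc c)" by (metis One_nat_def not0_implies_Suc)
  then show ?thesis
  proof cases
    case 1 then show ?thesis using L_b0[of i] assms by simp
  next
    case 2 then show ?thesis using L_b1[of i] assms by simp
  next
    case 3 then show ?thesis using L_b2[of i c] assms by simp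
  qed
qed

lemma Lop_add: "Lop n (p + q) = Lop n p + Lop n q"
  unfolding Lop_def by (simp add: E_add algebra_simps)
lemma Lop_of_nat: "Lop n (of_nat c * p) = of_nat c * Lop n p"
  unfolding Lop_def by (simp only: E_of_nat) (simp add: algebra_simps)
lemma Lop_zero: "Lop n 0 = 0"
  unfolding Lop_def Eop_def by simp
lemma Lop_sum: "Lop n (\<Sum>i\<in>A. f i) = (\<Sum>i\<in>A. Lop n (f i))"
  by (induction A rule: infinite_finite_induct) (simp_all add: Lop_zero Lop_add)

lemma coeff_Xp: "coeff (Xp * p) j = (if j = 0 then 0 else coeff p (j - 1))"
  by (cases j) (simp_all add: Xp_def)
lemma coeff_Eop: "coeff (Eop p) j = of_nat j * coeff p j"
  unfolding Eop_def coeff_Xp by (cases j) (simp_all add: coeff_pderiv)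
lemma coeff_of_nat_mult: "coeff (of_nat c * p) j = of_nat c * coeff p j"
  by (simp add: of_nat_poly)
lemma coeff_numeral_mult: "coeff (numeral c * p) j = numeral c * coeff p j"
  using coeff_of_nat_mult[of "numeral c" p j] by simp

definition Q :: "nat \<Rightarrow> real poly" where
  "Q n = (\<Sum>k<n. monom (real (A2 n k)) k)"

lemma coeff_Q: "coeff (Q n) j = real (A2 n j)"
  unfolding Q_def coeff_sum by (cases "j < n") (auto simp: A2_big)

lemma coeff_Lop: "coeff (Lop n p) j = (of_nat j + 1)^2 * coeff p j
   + (if j = 0 then 0 else (of_nat n - of_nat (j - 1))^2 * coeff p (j - 1))"
proof -
  have alt: "Lop n p = p + of_nat 2 * Eop p + Eop (Eop p) + Xp * (of_nat (n^2) * p - of_nat (2*n) * Eop p + Eop (Eop p))"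
    unfolding Lop_def by simp
  show ?thesis unfolding alt
  by (cases j) (simp_all only: coeff_add coeff_diff coeff_Xp coeff_Eop coeff_of_nat_mult coeff_numeral_mult,
      simp_all add: algebra_simps power2_eq_square)
qed

lemma Q_rec:
  assumes "n \<ge> 1"
  shows "Q (Suc n) = Lop n (Q n)"
proof (rule poly_eqI)
  fix j
  show "coeff (Q (Suc n)) j = coeff (Lop n (Q n)) j"
  proof (cases j)
    case 0
    then show ?thesis unfolding coeff_Lop coeff_Q using A2_rec[OF assms, of 0] by simp
  next
    case (Suc j')
    have r: "A2 (Suc n) j = (Suc j)^2 * A2 n j + (n - j')^2 * A2 n j'"
      using A2_rec[OF assms, of j] Suc by simp
    have "real ((n - j')^2 * A2 n j') = (real n - real j')^2 * real (A2 n j')"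
    proof (cases "j' \<le> n")
      case True then show ?thesis by (simp add: of_nat_diff)
    next
      case False then show ?thesis by (simp add: A2_big)
    qed
    then show ?thesis unfolding coeff_Lop coeff_Q r using Suc by (simp add: algebra_simps)
  qed
qed

definition cc :: "nat \<Rightarrow> nat \<Rightarrow> nat" where
  "cc m i = (m - 2 * i) * ((m - 2 * i) + 4 * i + 5)"

fun gam :: "nat \<Rightarrow> nat \<Rightarrow> nat" where
  "gam 0 i = (if i = 0 then 1 else 0)"
| "gam (Suc m) 0 = gam m 0"
| "gam (Suc m) (Suc i) = (Suc (Suc i))^2 * gam m (Suc i) + cc m i * gam m i"

lemma gam_zero: "m < 2 * i \<Longrightarrow> gam m i = 0"
proof (induction m arbitrary: i)
  case 0 then show ?case by simp
next
  case (Suc m)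
  then obtain i' where i: "i = Suc i'" by (cases i) auto
  have a: "gam m (Suc i') = 0" using Suc i by simp
  have b: "cc m i' * gam m i' = 0"
  proof (cases "m < 2 * i'")
    case True then show ?thesis using Suc.IH by simp
  next
    case False then have "m = 2 * i'" using Suc.prems i by simp
    then show ?thesis by (simp add: cc_def)
  qed
  show ?case using a b i by simp
qed

definition B :: "nat \<Rightarrow> nat \<Rightarrow> real poly" where
  "B m i = Xp ^ i * Yp ^ (m - 2 * i)"

lemma L_B:
  "of_nat (gam m i) * Lop (Suc m) (B m i) =
     of_nat (gam m i) * (of_nat ((i+1)^2) * B (Suc m) i + of_nat (cc m i) * B (Suc m) (Suc i))"
proof (cases "2 * i \<le> m")
  case True
  define r where "r = m - 2 * i"
  have m: "m = 2 * i + r" using True r_def by simp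
  have "Suc m - 2 * i = Suc r" "Suc m - 2 * Suc i = r - 1" using m by simp_all
  then show ?thesis unfolding B_def using L_b[OF m] by (simp add: cc_def r_def[symmetric])
next
  case False then show ?thesis using gam_zero[of m i] by simp
qed

lemma Q_gam: "Q (Suc m) = (\<Sum>i\<le>m. of_nat (gam m i) * B m i)"
proof (induction m)
  case 0
  have "Q 1 = 1" unfolding Q_def using A2_one by simp
  then show ?case by (simp add: B_def)
next
  case (Suc m)
  have "Q (Suc (Suc m)) = Lop (Suc m) (Q (Suc m))" by (rule Q_rec) simp
  also have "\<dots> = (\<Sum>i\<le>m. of_nat (gam m i) * Lop (Suc m) (B m i))"
    unfolding Suc by (simp add: Lop_sum Lop_of_nat)
  also have "\<dots> = (\<Sum>i\<le>m. of_nat (gam m i) * (of_nat ((i+1)^2) * B (Suc m) i + of_nat (cc m i) * B (Suc m) (Suc i)))"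
    by (simp only: L_B)
  also have "\<dots> = (\<Sum>i\<le>m. of_nat ((i+1)^2 * gam m i) * B (Suc m) i) + (\<Sum>i\<le>m. of_nat (cc m i * gam m i) * B (Suc m) (Suc i))"
    by (simp add: sum.distrib algebra_simps)
  also have "(\<Sum>i\<le>m. of_nat ((i+1)^2 * gam m i) * B (Suc m) i) = (\<Sum>i\<le>Suc m. of_nat ((i+1)^2 * gam m i) * B (Suc m) i)"
    using gam_zero[of m "Suc m"] by simp
  also have "\<dots> = of_nat (gam m 0) * B (Suc m) 0 + (\<Sum>i\<le>m. of_nat ((Suc (Suc i))^2 * gam m (Suc i)) * B (Suc m) (Suc i))"
    by (subst sum.atMost_Suc_shift) simp
  finally have "Q (Suc (Suc m)) = of_nat (gam m 0) * B (Suc m) 0 + (\<Sum>i\<le>m. of_nat (gam (Suc m) (Suc i)) * B (Suc m) (Suc i))"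
    by (simp add: sum.distrib[symmetric] algebra_simps)
  also have "\<dots> = (\<Sum>i\<le>Suc m. of_nat (gam (Suc m) i) * B (Suc m) i)"
    by (subst sum.atMost_Suc_shift) simp
  finally show ?case .
qed

lemma poly_B: "poly (B m i) t = t ^ i * (1 + t) ^ (m - 2 * i)"
  by (simp add: B_def Xp_def Yp_def poly_power)

theorem mainTheorem16:
  fixes n :: nat
  assumes "n \<ge> 2"
  shows "\<exists>\<gamma> :: nat \<Rightarrow> real.
           (\<forall>i \<le> (n - 1) div 2. \<gamma> i \<ge> 0) \<and>
           (\<forall>t :: real. (\<Sum>k = 0..n - 1. real (A2 n k) * t ^ k) =
              (\<Sum>i = 0..(n - 1) div 2. \<gamma> i * t ^ i * (1 + t) ^ (n - 1 - 2 * i)))"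
proof -
  obtain m where n: "n = Suc m" using assms by (cases n) auto
  show ?thesis
  proof (intro exI conjI allI impI)
    fix i show "real (gam m i) \<ge> 0" by simp
  next
    fix t :: real
    have "(\<Sum>k = 0..n - 1. real (A2 n k) * t ^ k) = poly (Q n) t"
      unfolding Q_def n by (simp add: poly_sum poly_monom atLeast0AtMost lessThan_Suc_atMost)
    also have "\<dots> = (\<Sum>i\<le>m. real (gam m i) * (t ^ i * (1 + t) ^ (m - 2 * i)))"
      unfolding n Q_gam by (simp add: poly_sum poly_B)
    also have "\<dots> = (\<Sum>i = 0..m div 2. real (gam m i) * (t ^ i * (1 + t) ^ (m - 2 * i)))"
    proof (rule sum.mono_neutral_right)
      show "finite {..m}" by simp
      show "{0..m div 2} \<subseteq> {..m}" by auto
      show "\<forall>i\<in>{..m} - {0..m div 2}. real (gam m i) * (t ^ i * (1 + t) ^ (m - 2 * i)) = 0"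
        using gam_zero[of m] by auto
    qed
    finally show "(\<Sum>k = 0..n - 1. real (A2 n k) * t ^ k) =
              (\<Sum>i = 0..(n - 1) div 2. real (gam m i) * t ^ i * (1 + t) ^ (n - 1 - 2 * i))"
      unfolding n by (simp add: mult.assoc)
  qed
qed

end
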